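(* The generating function $F(x)=\sum_{n\ge0}f(n)x^n$ satisfies $$F(x)=\frac{B(x)-x}{(1-x)^2},$$ where $B(x)=\sum_{n\ge0}b(n)x^n$, and also $$F(x)=\frac{(1+x)^2}{1-x}F(x^2)-\frac{x(1-2x^2)}{(1-x)^2(1-x^2)}.$$
   Context: A partition $n=p_1+\cdots+p_k$ with $1\le p_1\le\cdots\le p_k$ is non-squashing if $p_1+\cdots+p_j\le p_{j+1}$ for all $1\le j\le k-1$; $b(n)$ is the number of non-squashing partitions of $n$ into distinct parts ($b(0)=1$). $f(n)$ is the number of (possibly empty) sets of distinct integers $1\le p_1<p_2<\cdots<p_k\le n$ satisfying $p_1+\cdots+p_j\le p_{j+1}$ for $1\le j\le k-1$. *)

theory Defs
  imports "HOL-Computational_Algebra.Formal_Power_Series"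
begin

definition non_squashing :: "nat list \<Rightarrow> bool" where
  "non_squashing ps \<longleftrightarrow>
     (\<forall>j. 1 \<le> j \<and> j < length ps \<longrightarrow> sum_list (take j ps) \<le> ps ! j)"

definition b :: "nat \<Rightarrow> nat" where
  "b n = card {ps. sorted_wrt (<) ps \<and> (\<forall>p\<in>set ps. 1 \<le> p) \<and>
                   sum_list ps = n \<and> non_squashing ps}"

definition f :: "nat \<Rightarrow> nat" where
  "f n = card {ps. sorted_wrt (<) ps \<and> set ps \<subseteq> {1..n} \<and> non_squashing ps}"

definition Fgf :: "real fps" where
  "Fgf = Abs_fps (\<lambda>n. real (f n))"

definition Bgf :: "real fps" where
  "Bgf = Abs_fps (\<lambda>n. real (b n))"

end

theory Submission
  imports Defs
begin

unbundle fps_syntax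

definition NS :: "nat list set" where
  "NS = {ps. sorted_wrt (<) ps \<and> (\<forall>p\<in>set ps. 1 \<le> p) \<and> non_squashing ps}"

lemma ns_snoc: "non_squashing (qs @ [p]) \<longleftrightarrow> non_squashing qs \<and> (qs \<noteq> [] \<longrightarrow> sum_list qs \<le> p)"
proof
  assume H: "non_squashing (qs @ [p])"
  have "non_squashing qs" unfolding non_squashing_def
  proof (intro allI impI)
    fix j assume j: "1 \<le> j \<and> j < length qs"
    then have "sum_list (take j (qs @ [p])) \<le> (qs @ [p]) ! j" using H unfolding non_squashing_def by auto
    then show "sum_list (take j qs) \<le> qs ! j" using j by (simp add: nth_append)
  qed
  moreover have "qs \<noteq> [] \<longrightarrow> sum_list qs \<le> p"
  proof
    assume "qs \<noteq> []"
    then have "1 \<le> length qs \<and> length qs < length (qs @ [p])" by (cases qs) auto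
    then have "sum_list (take (length qs) (qs @ [p])) \<le> (qs @ [p]) ! length qs" using H unfolding non_squashing_def by blast
    then show "sum_list qs \<le> p" by simp
  qed
  ultimately show "non_squashing qs \<and> (qs \<noteq> [] \<longrightarrow> sum_list qs \<le> p)" by blast
next
  assume H: "non_squashing qs \<and> (qs \<noteq> [] \<longrightarrow> sum_list qs \<le> p)"
  show "non_squashing (qs @ [p])" unfolding non_squashing_def
  proof (intro allI impI)
    fix j assume j: "1 \<le> j \<and> j < length (qs @ [p])"
    show "sum_list (take j (qs @ [p])) \<le> (qs @ [p]) ! j"
    proof (cases "j < length qs")
      case True
      then show ?thesis using H j unfolding non_squashing_def by (simp add: nth_append)
    next
      case False
      then have "j = length qs" using j by simp
      moreover have "qs \<noteq> []" using j \<open>j = length qs\<close> by auto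
      ultimately show ?thesis using H by simp
    qed
  qed
qed

lemma length_le_sum: "\<forall>y\<in>set qs. 1 \<le> (y::nat) \<Longrightarrow> length qs \<le> sum_list qs"
  by (induction qs) auto

lemma sum_list_single_pos:
  assumes "\<forall>y\<in>set qs. 1 \<le> (y::nat)" "x \<in> set qs" "sum_list qs \<le> x"
  shows "qs = [x]"
proof -
  obtain as bs where qs: "qs = as @ x # bs" using split_list[OF assms(2)] by blast
  have s0: "sum_list as = 0" "sum_list bs = 0" using assms(3) qs by auto
  have p0: "\<forall>y\<in>set as. 1 \<le> y" "\<forall>y\<in>set bs. 1 \<le> y" using assms(1) qs by auto
  have "as = []" using length_le_sum[OF p0(1)] s0(1) by (metis le_zero_eq length_0_conv)
  moreover have "bs = []" using length_le_sum[OF p0(2)] s0(2) by (metis le_zero_eq length_0_conv)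
  ultimately have "as = []" "bs = []" by auto
  then show ?thesis using qs by simp
qed

lemma NS_snoc:
  assumes "qs \<in> NS" "1 \<le> p"
  shows "qs @ [p] \<in> NS \<longleftrightarrow> sum_list qs \<le> p \<and> qs \<noteq> [p]"
proof
  assume H: "qs @ [p] \<in> NS"
  then have "qs \<noteq> [] \<longrightarrow> sum_list qs \<le> p" unfolding NS_def by (simp add: ns_snoc)
  then have "sum_list qs \<le> p" by (cases "qs = []") auto
  moreover have "qs \<noteq> [p]" using H unfolding NS_def by (auto simp: sorted_wrt_append)
  ultimately show "sum_list qs \<le> p \<and> qs \<noteq> [p]" by blast
next
  assume H: "sum_list qs \<le> p \<and> qs \<noteq> [p]"
  have pos: "\<forall>y\<in>set qs. 1 \<le> y" using assms(1) unfolding NS_def by auto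
  have "\<forall>x\<in>set qs. x < p"
  proof
    fix x assume x: "x \<in> set qs"
    have "x \<le> sum_list qs" using x by (simp add: member_le_sum_list)
    then have "x \<le> p" using H by simp
    moreover have "x \<noteq> p"
    proof
      assume "x = p"
      then have "qs = [x]" using sum_list_single_pos[OF pos x] H by simp
      then show False using H \<open>x = p\<close> by simp
    qed
    ultimately show "x < p" by simp
  qed
  then show "qs @ [p] \<in> NS" using assms H unfolding NS_def by (auto simp: sorted_wrt_append ns_snoc)
qed

lemma NS_butlast: "qs @ [p] \<in> NS \<Longrightarrow> qs \<in> NS \<and> 1 \<le> p"
  unfolding NS_def by (auto simp: sorted_wrt_append ns_snoc)


lemma finite_NS_le: "finite {ps\<in>NS. sum_list ps \<le> m}"
proof (rule finite_subset[OF _ finite_lists_length_le[of "{0..m}" m]])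
  show "{ps \<in> NS. sum_list ps \<le> m} \<subseteq> {xs. set xs \<subseteq> {0..m} \<and> length xs \<le> m}"
  proof clarify
    fix ps assume "ps \<in> NS" "sum_list ps \<le> m"
    then have "length ps \<le> m" using length_le_sum[of ps] unfolding NS_def by auto
    moreover have "set ps \<subseteq> {0..m}" using \<open>sum_list ps \<le> m\<close> member_le_sum_list[of _ ps] by fastforce
    ultimately show "set ps \<subseteq> {0..m} \<and> length ps \<le> m" by blast
  qed
qed simp

lemma NS_sum0: "ps \<in> NS \<Longrightarrow> sum_list ps = 0 \<Longrightarrow> ps = []"
proof -
  assume a: "ps \<in> NS" "sum_list ps = 0"
  have "\<forall>y\<in>set ps. 1 \<le> y" using a(1) unfolding NS_def by auto
  from length_le_sum[OF this] a(2) show "ps = []" by (metis le_zero_eq length_0_conv)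
qed

lemma Nil_NS: "[] \<in> NS" unfolding NS_def non_squashing_def by simp

definition S :: "nat \<Rightarrow> nat" where "S m = card {ps\<in>NS. sum_list ps \<le> m}"

lemma b_NS: "b n = card {ps\<in>NS. sum_list ps = n}"
  unfolding b_def NS_def by (rule arg_cong[where f=card]) auto

lemma S_0: "S 0 = 1"
proof -
  have "{ps\<in>NS. sum_list ps \<le> 0} = {[]}" using NS_sum0 Nil_NS by auto
  then show ?thesis unfolding S_def by simp
qed

lemma b_0: "b 0 = 1"
proof -
  have "{ps\<in>NS. sum_list ps = 0} = {[]}" using NS_sum0 Nil_NS by auto
  then show ?thesis unfolding b_NS by simp
qed

lemma S_Suc: "S (Suc m) = S m + b (Suc m)"
proof -
  have "{ps\<in>NS. sum_list ps \<le> Suc m} = {ps\<in>NS. sum_list ps \<le> m} \<union> {ps\<in>NS. sum_list ps = Suc m}" by auto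
  moreover have "finite {ps\<in>NS. sum_list ps = Suc m}"
    by (rule finite_subset[OF _ finite_NS_le[of "Suc m"]]) auto
  ultimately show ?thesis unfolding S_def b_NS
    by (simp add: card_Un_disjoint finite_NS_le disjoint_iff)
qed

lemma b_set:
  assumes "1 \<le> n"
  shows "{ps\<in>NS. sum_list ps = n} =
     (\<lambda>qs. qs @ [n - sum_list qs]) ` ({qs\<in>NS. sum_list qs \<le> n div 2} - {[n - n div 2]})"
proof
  show "{ps\<in>NS. sum_list ps = n} \<subseteq> (\<lambda>qs. qs @ [n - sum_list qs]) ` ({qs\<in>NS. sum_list qs \<le> n div 2} - {[n - n div 2]})"
  proof
    fix ps assume "ps \<in> {ps\<in>NS. sum_list ps = n}"
    then have ps: "ps \<in> NS" "n = sum_list ps" by auto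
    then have "ps \<noteq> []" using assms by auto
    then obtain qs p where qp: "ps = qs @ [p]" by (metis rev_exhaust)
    have q: "qs \<in> NS" "1 \<le> p" using NS_butlast ps qp by auto
    have c: "sum_list qs \<le> p" "qs \<noteq> [p]" using NS_snoc[OF q] ps qp by auto
    have sn: "sum_list qs + p = n" using ps qp by simp
    have "qs \<noteq> [n - n div 2]"
    proof
      assume "qs = [n - n div 2]"
      then have "p = n div 2" "n - n div 2 \<le> n div 2" using sn c by auto
      then show False using \<open>qs = [n - n div 2]\<close> c sn by auto
    qed
    moreover have "sum_list qs \<le> n div 2" using c sn by linarith
    moreover have "p = n - sum_list qs" using sn by simp
    ultimately show "ps \<in> (\<lambda>qs. qs @ [n - sum_list qs]) ` ({qs\<in>NS. sum_list qs \<le> n div 2} - {[n - n div 2]})"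
      using qp q by auto
  qed
next
  show "(\<lambda>qs. qs @ [n - sum_list qs]) ` ({qs\<in>NS. sum_list qs \<le> n div 2} - {[n - n div 2]}) \<subseteq> {ps\<in>NS. sum_list ps = n}"
  proof
    fix x assume "x \<in> (\<lambda>qs. qs @ [n - sum_list qs]) ` ({qs\<in>NS. sum_list qs \<le> n div 2} - {[n - n div 2]})"
    then obtain qs where q: "qs \<in> NS" "sum_list qs \<le> n div 2" "qs \<noteq> [n - n div 2]" and xq: "x = qs @ [n - sum_list qs]" by auto
    have p1: "1 \<le> n - sum_list qs" using q assms by linarith
    have "sum_list qs \<le> n - sum_list qs" using q by linarith
    moreover have "qs \<noteq> [n - sum_list qs]"
    proof
      assume h: "qs = [n - sum_list qs]"
      have e: "sum_list qs = sum_list [n - sum_list qs]" using arg_cong[OF h, of sum_list] .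
      have "sum_list qs = n - sum_list qs" using e by (simp only: sum_list.Cons sum_list.Nil add_0_right)
      then have "n - sum_list qs = n - n div 2" by linarith
      then have "[n - sum_list qs] = [n - n div 2]" by simp
      then show False by (rule notE[OF q(3) trans[OF h]])
    qed
    ultimately have "qs @ [n - sum_list qs] \<in> NS" using NS_snoc[OF q(1) p1] by blast
    moreover have "sum_list (qs @ [n - sum_list qs]) = n" using q by simp
    ultimately show "x \<in> {ps\<in>NS. sum_list ps = n}" using xq by blast
  qed
qed

lemma b_rec:
  assumes "1 \<le> n"
  shows "real (b n) = real (S (n div 2)) - (if even n then 1 else 0)"
proof -
  let ?A = "{qs\<in>NS. sum_list qs \<le> n div 2}"
  have inj: "inj_on (\<lambda>qs. qs @ [n - sum_list qs]) (?A - {[n - n div 2]})"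
    by (rule inj_onI) simp
  have bn: "b n = card (?A - {[n - n div 2]})"
    unfolding b_NS b_set[OF assms] by (rule card_image[OF inj])
  have mem: "[n - n div 2] \<in> ?A \<longleftrightarrow> even n"
  proof -
    have "[n - n div 2] \<in> NS" unfolding NS_def non_squashing_def using assms by auto
    then have "[n - n div 2] \<in> ?A \<longleftrightarrow> n - n div 2 \<le> n div 2" by simp
    moreover have "n - n div 2 \<le> n div 2 \<longleftrightarrow> even n" by presburger
    ultimately show ?thesis by blast
  qed
  show ?thesis
  proof (cases "even n")
    case True
    then have "card ?A = Suc (card (?A - {[n - n div 2]}))"
      using card_Suc_Diff1[OF finite_NS_le, of "[n - n div 2]" "n div 2"] mem True by simp
    then show ?thesis using bn True unfolding S_def by simp
  next
    case False
    then have "?A - {[n - n div 2]} = ?A" using mem by blast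
    then show ?thesis using bn False unfolding S_def by simp
  qed
qed

definition Fset :: "nat \<Rightarrow> nat list set" where
  "Fset n = {ps. sorted_wrt (<) ps \<and> set ps \<subseteq> {1..n} \<and> non_squashing ps}"

lemma Fset_0: "Fset 0 = {[]}"
  unfolding Fset_def non_squashing_def by auto

lemma Fset_Suc: "Fset (Suc n) = Fset n \<union> (\<lambda>qs. qs @ [Suc n]) ` ({qs\<in>NS. sum_list qs \<le> Suc n} - {[Suc n]})"
proof
  show "Fset (Suc n) \<subseteq> Fset n \<union> (\<lambda>qs. qs @ [Suc n]) ` ({qs\<in>NS. sum_list qs \<le> Suc n} - {[Suc n]})"
  proof
    fix ps assume ps: "ps \<in> Fset (Suc n)"
    show "ps \<in> Fset n \<union> (\<lambda>qs. qs @ [Suc n]) ` ({qs\<in>NS. sum_list qs \<le> Suc n} - {[Suc n]})"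
    proof (cases "Suc n \<in> set ps")
      case False
      then have "ps \<in> Fset n" using ps unfolding Fset_def by (auto simp: subset_iff) (metis le_SucE)
      then show ?thesis by blast
    next
      case True
      then have "ps \<noteq> []" by auto
      then obtain qs p where qp: "ps = qs @ [p]" by (metis rev_exhaust)
      have NSps: "ps \<in> NS" using ps unfolding Fset_def NS_def by auto
      have lt: "\<forall>x\<in>set qs. x < p" "p \<le> Suc n" using ps qp unfolding Fset_def by (auto simp: sorted_wrt_append)
      have "p = Suc n" using True lt qp by auto
      have q: "qs \<in> NS" "1 \<le> p" using NS_butlast NSps qp by auto
      have "sum_list qs \<le> p \<and> qs \<noteq> [p]" using NS_snoc[OF q] NSps qp by auto
      then show ?thesis using qp q \<open>p = Suc n\<close> by auto
    qed
  qed
next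
  show "Fset n \<union> (\<lambda>qs. qs @ [Suc n]) ` ({qs\<in>NS. sum_list qs \<le> Suc n} - {[Suc n]}) \<subseteq> Fset (Suc n)"
  proof
    fix ps assume "ps \<in> Fset n \<union> (\<lambda>qs. qs @ [Suc n]) ` ({qs\<in>NS. sum_list qs \<le> Suc n} - {[Suc n]})"
    then consider "ps \<in> Fset n" | qs where "qs \<in> NS" "sum_list qs \<le> Suc n" "qs \<noteq> [Suc n]" "ps = qs @ [Suc n]" by auto
    then show "ps \<in> Fset (Suc n)"
    proof cases
      case 1
      then show ?thesis unfolding Fset_def by auto
    next
      case 2
      then have "ps \<in> NS" using NS_snoc[of qs "Suc n"] by auto
      then have "\<forall>x\<in>set qs. x < Suc n" using 2 unfolding NS_def by (auto simp: sorted_wrt_append)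
      then show ?thesis using \<open>ps \<in> NS\<close> 2 unfolding NS_def Fset_def by auto
    qed
  qed
qed

lemma finite_Fset: "finite (Fset n)"
proof (induction n)
  case 0 then show ?case by (simp add: Fset_0)
next
  case (Suc n) then show ?case by (simp add: Fset_Suc finite_NS_le)
qed

lemma f_Fset: "f n = card (Fset n)" unfolding f_def Fset_def by simp

lemma f_0: "f 0 = 1" by (simp add: f_Fset Fset_0)

lemma f_Suc: "real (f (Suc n)) = real (f n) + real (S (Suc n)) - 1"
proof -
  let ?A = "{qs\<in>NS. sum_list qs \<le> Suc n}"
  have inj: "inj_on (\<lambda>qs. qs @ [Suc n]) (?A - {[Suc n]})" by (rule inj_onI) simp
  have disj: "Fset n \<inter> (\<lambda>qs. qs @ [Suc n]) ` (?A - {[Suc n]}) = {}"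
    unfolding Fset_def by auto
  have c: "card (Fset (Suc n)) = card (Fset n) + card (?A - {[Suc n]})"
    unfolding Fset_Suc
    by (subst card_Un_disjoint) (use finite_Fset finite_NS_le disj card_image[OF inj] in auto)
  have mem: "[Suc n] \<in> ?A" unfolding NS_def non_squashing_def by auto
  have "card ?A = Suc (card (?A - {[Suc n]}))"
    using card_Suc_Diff1[OF finite_NS_le mem] by simp
  then show ?thesis using c unfolding f_Fset S_def by simp
qed

lemma nth_1mX: "((A::real fps) * (1 - fps_X)) $ n = A $ n - (if n = 0 then 0 else A $ (n - 1))"
  by (simp add: right_diff_distrib)

lemma nth_1mX2: "((A::real fps) * (1 - fps_X^2)) $ n = A $ n - (if n < 2 then 0 else A $ (n - 2))"
  by (simp add: right_diff_distrib fps_X_power_mult_right_nth)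

lemma F_rel: "Fgf * (1 - fps_X)^2 = Bgf - fps_X"
proof -
  define G where "G = Fgf * (1 - fps_X)"
  have G: "G $ n = (if n = 0 then 1 else real (S n) - 1)" for n
  proof (cases n)
    case 0 then show ?thesis by (simp add: G_def nth_1mX Fgf_def f_0)
  next
    case (Suc m) then show ?thesis by (simp add: G_def nth_1mX Fgf_def f_Suc)
  qed
  have "G * (1 - fps_X) = Bgf - fps_X"
  proof (rule fps_ext)
    fix n
    show "(G * (1 - fps_X)) $ n = (Bgf - fps_X) $ n"
    proof (cases n)
      case 0 then show ?thesis by (simp add: nth_1mX G Bgf_def b_0)
    next
      case (Suc m)
      show ?thesis
      proof (cases m)
        case 0 then show ?thesis using Suc by (simp add: nth_1mX G Bgf_def S_Suc S_0)
      next
        case (Suc k) then show ?thesis using \<open>n = Suc m\<close> by (simp add: nth_1mX G Bgf_def S_Suc)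
      qed
    qed
  qed
  then show ?thesis by (simp add: G_def power2_eq_square mult.assoc)
qed

lemma compose_X2_nth: "((A::real fps) oo fps_X^2) $ n = (if even n then A $ (n div 2) else 0)"
proof -
  have "((A::real fps) oo fps_X^2) $ n = (\<Sum>i=0..n. A $ i * (if n = 2 * i then 1 else 0))"
    by (simp add: fps_compose_nth power_mult[symmetric])
  also have "\<dots> = (\<Sum>i=0..n. if i = n div 2 \<and> even n then A $ i else 0)"
    by (rule sum.cong) auto
  also have "\<dots> = (if even n then A $ (n div 2) else 0)"
    by (cases "even n") (simp_all add: sum.delta')
  finally show ?thesis .
qed

lemma b_1: "b 1 = 1"
  using b_rec[of 1] S_0 by simp

lemma b_1': "b (Suc 0) = Suc 0" using b_1 by simp

lemma b_2: "b (Suc (Suc 0)) = Suc 0"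
  using b_rec[of 2] S_Suc[of 0] S_0 b_1 by (simp add: numeral_2_eq_2)

lemma b_step: "real (b (m + 2)) - real (b m) = real (b ((m + 2) div 2)) - (if m = 0 then 1 else 0)"
proof (cases "m = 0")
  case True
  then show ?thesis using b_2 b_0 b_1 by (simp add: numeral_2_eq_2)
next
  case False
  have e1: "real (b (m + 2)) = real (S (m div 2 + 1)) - (if even m then 1 else 0)"
    using b_rec[of "m+2"] by simp
  have e2: "real (b m) = real (S (m div 2)) - (if even m then 1 else 0)"
    using b_rec[of m] False by simp
  have "(m + 2) div 2 = Suc (m div 2)" by simp
  then show ?thesis using e1 e2 S_Suc[of "m div 2"] False by simp
qed

lemma B_rel: "Bgf * (1 - fps_X^2) = (1 + fps_X) * (Bgf oo fps_X^2) - fps_X^2"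
proof (rule fps_ext)
  fix n
  show "(Bgf * (1 - fps_X^2)) $ n = ((1 + fps_X) * (Bgf oo fps_X^2) - fps_X^2) $ n"
  proof -
    have r: "((1 + fps_X) * (Bgf oo fps_X^2) - fps_X^2) $ n =
       (Bgf oo fps_X^2) $ n + (if n = 0 then 0 else (Bgf oo fps_X^2) $ (n - 1)) - (if n = 2 then 1 else 0)"
      by (simp add: distrib_right)
    consider "n = 0" | "n = 1" | m where "n = m + 2" by (metis One_nat_def add_2_eq_Suc' not0_implies_Suc)
    then show ?thesis
    proof cases
      case 1 then show ?thesis using r by (simp add: nth_1mX2 compose_X2_nth Bgf_def)
    next
      case 2 then show ?thesis using r by (simp add: nth_1mX2 compose_X2_nth Bgf_def b_0 b_1 b_1')
    next
      case 3
      have "(Bgf oo fps_X^2) $ n + (Bgf oo fps_X^2) $ (n - 1) = real (b (n div 2))"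
        using 3 by (cases "even m") (auto simp: compose_X2_nth Bgf_def elim!: evenE oddE)
      then show ?thesis using r 3 b_step[of m] by (simp add: nth_1mX2 Bgf_def)
    qed
  qed
qed

lemma F2_rel: "(Fgf oo fps_X^2) * (1 - fps_X^2)^2 = (Bgf oo fps_X^2) - fps_X^2"
proof -
  have z: "(fps_X^2 :: real fps) $ 0 = 0" by simp
  have "(Fgf * (1 - fps_X)^2) oo fps_X^2 = (Bgf - fps_X) oo fps_X^2" by (simp add: F_rel)
  moreover have "(Fgf * (1 - fps_X)^2) oo fps_X^2 = (Fgf oo fps_X^2) * (1 - fps_X^2)^2"
    by (simp add: fps_compose_mult_distrib[OF z] fps_compose_power[OF z, symmetric] fps_compose_sub_distrib)
  moreover have "(Bgf - fps_X) oo fps_X^2 = (Bgf oo fps_X^2) - fps_X^2"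
    by (simp add: fps_compose_sub_distrib)
  ultimately show ?thesis by simp
qed

theorem corollary7:
  shows "Fgf = (Bgf - fps_X) / (1 - fps_X)^2 \<and>
         Fgf = (1 + fps_X)^2 / (1 - fps_X) * (Fgf oo fps_X^2)
              - fps_X * (1 - 2 * fps_X^2) / ((1 - fps_X)^2 * (1 - fps_X^2))"
proof
  have u0: "((1 - fps_X)^2 :: real fps) $ 0 \<noteq> 0" by (simp add: fps_square_nth)
  have iu2: "inverse ((1 - fps_X)^2) * (1 - fps_X)^2 = (1::real fps)"
    by (rule inverse_mult_eq_1[OF u0])
  have "Fgf = Fgf * ((1 - fps_X)^2 * inverse ((1 - fps_X)^2))" using iu2 by (simp add: mult.commute)
  also have "\<dots> = (Bgf - fps_X) * inverse ((1 - fps_X)^2)" by (simp add: F_rel mult.assoc[symmetric])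
  finally show "Fgf = (Bgf - fps_X) / (1 - fps_X)^2" by (simp add: fps_divide_unit[OF u0])
next
  let ?X = "fps_X :: real fps"
  let ?D = "(1 - ?X)^2 * (1 - ?X^2)"
  let ?F2 = "Fgf oo ?X^2"
  let ?B2 = "Bgf oo ?X^2"
  have d0: "?D $ 0 \<noteq> 0" by (simp add: fps_square_nth)
  have v0: "(1 - ?X) $ 0 \<noteq> 0" by simp
  have iD: "inverse ?D * ?D = 1" by (rule inverse_mult_eq_1[OF d0])
  have iu: "inverse (1 - ?X) * (1 - ?X) = 1" by (rule inverse_mult_eq_1[OF v0])
  define R where "R = (1 + ?X)^2 * inverse (1 - ?X) * ?F2 - ?X * (1 - 2 * ?X^2) * inverse ?D"
  have "R * ?D = (1 + ?X)^2 * (inverse (1 - ?X) * (1 - ?X)) * (1 - ?X) * (1 - ?X^2) * ?F2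
          - ?X * (1 - 2 * ?X^2) * (inverse ?D * ?D)"
    unfolding R_def by (simp add: algebra_simps power2_eq_square)
  also have "\<dots> = (1 + ?X)^2 * (1 - ?X) * (1 - ?X^2) * ?F2 - ?X * (1 - 2 * ?X^2)"
    by (simp add: iu iD)
  finally have RD: "R * ?D = (1 + ?X)^2 * (1 - ?X) * (1 - ?X^2) * ?F2 - ?X * (1 - 2 * ?X^2)" .
  have "Fgf * ?D = (Bgf - ?X) * (1 - ?X^2)" by (simp add: F_rel mult.assoc[symmetric])
  also have "\<dots> = Bgf * (1 - ?X^2) - ?X * (1 - ?X^2)" by (simp add: algebra_simps)
  also have "\<dots> = (1 + ?X) * ?B2 - ?X^2 - ?X * (1 - ?X^2)" by (simp add: B_rel)
  also have "?B2 = ?F2 * (1 - ?X^2)^2 + ?X^2" using F2_rel by (simp add: algebra_simps)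
  finally have FD: "Fgf * ?D = (1 + ?X) * (?F2 * (1 - ?X^2)^2 + ?X^2) - ?X^2 - ?X * (1 - ?X^2)" .
  have "Fgf * ?D = R * ?D" unfolding FD RD by (simp add: algebra_simps power2_eq_square)
  note eq = this
  have "Fgf = Fgf * (inverse ?D * ?D)" using iD by simp
  also have "\<dots> = (Fgf * ?D) * inverse ?D" by (simp only: mult_ac)
  also have "\<dots> = (R * ?D) * inverse ?D" using eq by simp
  also have "\<dots> = R * (inverse ?D * ?D)" by (simp only: mult_ac)
  also have "\<dots> = R" using iD by simp
  finally have "Fgf = R" .
  then show "Fgf = (1 + ?X)^2 / (1 - ?X) * ?F2 - ?X * (1 - 2 * ?X^2) / ?D"
    unfolding R_def by (simp add: fps_divide_unit[OF v0] fps_divide_unit[OF d0])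
qed

end
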